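(* Let $n\ge4$ and $\mathcal{A}\in\mathcal{S}_n$. Then $\operatorname{Ann}\mathcal{A}=\langle e_n\rangle$, and the automorphisms of $\mathcal{A}$ are exactly the linear maps $e_1\mapsto e_1+xe_n$, $e_i\mapsto e_i$ ($2\le i\le n$), with $x\in\mathbb{C}$.
   Context: Over $\mathbb{C}$, basis $e_1,\dots,e_n$, $e_ie_j=\sum_kc_{ij}^ke_k$. Condition ( * ): $c_{ij}^k=0$ whenever $k\le\max\{i,j\}$. For $n\ge4$, $\mathcal{S}_n$ is the family of commutative structures satisfying ( * ) with $e_i^2=e_{i+1}$ ($1\le i\le n-1$), $c_{23}^4=1$, $c_{12}^4\ne0$, $c_{1i}^{i+1}=0$ ($2\le i\le n-1$), other constants arbitrary subject to ( * ) and commutativity. $\operatorname{Ann}\mathcal{A}=\{a:a\mathcal{A}+\mathcal{A}a=0\}$. *)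

theory Defs
  imports Main "HOL.Complex"
begin

text \<open>The algebra with basis e_1..e_n over the complex numbers is modelled as the
space of coordinate vectors v :: nat => complex supported on {1..n}; the
structure constants are c i j k, meaning e_i e_j = sum_k c i j k e_k.\<close>

definition vspace :: "nat \<Rightarrow> (nat \<Rightarrow> complex) set" where
  "vspace n = {v. \<forall>k. k \<notin> {1..n} \<longrightarrow> v k = 0}"

definition basis_vec :: "nat \<Rightarrow> nat \<Rightarrow> complex" where
  "basis_vec i = (\<lambda>k. if k = i then 1 else 0)"

definition vadd :: "(nat \<Rightarrow> complex) \<Rightarrow> (nat \<Rightarrow> complex) \<Rightarrow> nat \<Rightarrow> complex" where
  "vadd a b = (\<lambda>k. a k + b k)"

definition vscale :: "complex \<Rightarrow> (nat \<Rightarrow> complex) \<Rightarrow> nat \<Rightarrow> complex" where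
  "vscale t a = (\<lambda>k. t * a k)"

definition zero_vec :: "nat \<Rightarrow> complex" where
  "zero_vec = (\<lambda>k. 0)"

definition alg_mult :: "nat \<Rightarrow> (nat \<Rightarrow> nat \<Rightarrow> nat \<Rightarrow> complex) \<Rightarrow>
    (nat \<Rightarrow> complex) \<Rightarrow> (nat \<Rightarrow> complex) \<Rightarrow> nat \<Rightarrow> complex" where
  "alg_mult n c a b = (\<lambda>k. if k \<in> {1..n}
      then (\<Sum>i\<in>{1..n}. \<Sum>j\<in>{1..n}. a i * b j * c i j k) else 0)"

definition in_S :: "nat \<Rightarrow> (nat \<Rightarrow> nat \<Rightarrow> nat \<Rightarrow> complex) \<Rightarrow> bool" where
  "in_S n c \<longleftrightarrow>
     (\<forall>i\<in>{1..n}. \<forall>j\<in>{1..n}. \<forall>k\<in>{1..n}. c i j k = c j i k) \<and>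
     (\<forall>i\<in>{1..n}. \<forall>j\<in>{1..n}. \<forall>k\<in>{1..n}. k \<le> max i j \<longrightarrow> c i j k = 0) \<and>
     (\<forall>i\<in>{1..n-1}. \<forall>k\<in>{1..n}. c i i k = (if k = i + 1 then 1 else 0)) \<and>
     c 2 3 4 = 1 \<and> c 1 2 4 \<noteq> 0 \<and>
     (\<forall>i\<in>{2..n-1}. c 1 i (i + 1) = 0)"

definition annihilator :: "nat \<Rightarrow> (nat \<Rightarrow> nat \<Rightarrow> nat \<Rightarrow> complex) \<Rightarrow> (nat \<Rightarrow> complex) set" where
  "annihilator n c = {a \<in> vspace n. \<forall>b \<in> vspace n.
      alg_mult n c a b = zero_vec \<and> alg_mult n c b a = zero_vec}"

text \<open>Algebra automorphisms: bijective linear maps of the space preserving the product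
(only the values on the space matter).\<close>
definition is_automorphism :: "nat \<Rightarrow> (nat \<Rightarrow> nat \<Rightarrow> nat \<Rightarrow> complex) \<Rightarrow>
    ((nat \<Rightarrow> complex) \<Rightarrow> (nat \<Rightarrow> complex)) \<Rightarrow> bool" where
  "is_automorphism n c f \<longleftrightarrow>
     bij_betw f (vspace n) (vspace n) \<and>
     (\<forall>a\<in>vspace n. \<forall>b\<in>vspace n. f (vadd a b) = vadd (f a) (f b)) \<and>
     (\<forall>t. \<forall>a\<in>vspace n. f (vscale t a) = vscale t (f a)) \<and>
     (\<forall>a\<in>vspace n. \<forall>b\<in>vspace n. f (alg_mult n c a b) = alg_mult n c (f a) (f b))"

end

theory Submission
  imports Defs
begin

lemma S_up: "in_S n c \<Longrightarrow> i\<in>{1..n} \<Longrightarrow> j\<in>{1..n} \<Longrightarrow> k\<in>{1..n} \<Longrightarrow> k \<le> max i j \<Longrightarrow> c i j k = 0"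
  unfolding in_S_def by blast
lemma S_sq: assumes "in_S n c" "1 \<le> i" "i < n" "k\<in>{1..n}" shows "c i i k = (if k = i+1 then 1 else 0)"
proof -
  have h: "\<forall>i\<in>{1..n-1}. \<forall>k\<in>{1..n}. c i i k = (if k = i + 1 then 1 else 0)"
    using assms(1) unfolding in_S_def by blast
  have "i \<in> {1..n-1}" using assms(2,3) by auto
  then show ?thesis using h assms(4) by blast
qed
lemma S_234: "in_S n c \<Longrightarrow> c 2 3 4 = 1" unfolding in_S_def by blast
lemma S_124: "in_S n c \<Longrightarrow> c 1 2 4 \<noteq> 0" unfolding in_S_def by blast
lemma S_1i: assumes "in_S n c" "2 \<le> i" "i < n" shows "c 1 i (i+1) = 0"
proof -
  have h: "\<forall>i\<in>{2..n-1}. c 1 i (i + 1) = 0" using assms(1) unfolding in_S_def by blast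
  show ?thesis using h assms(2,3) by auto
qed

lemma mult_low:
  assumes S: "in_S n c" and a: "\<forall>p<j. a p = 0"
  shows "alg_mult n c a b j = 0"
proof (cases "j \<in> {1..n}")
  case True
  have "\<forall>p\<in>{1..n}. \<forall>q\<in>{1..n}. a p * b q * c p q j = 0"
  proof (intro ballI)
    fix p q assume p: "p \<in> {1..n}" and q: "q \<in> {1..n}"
    show "a p * b q * c p q j = 0"
    proof (cases "p < j")
      case True then show ?thesis using a by simp
    next
      case False then have "j \<le> max p q" by simp
      then show ?thesis using S_up[OF S p q \<open>j\<in>_\<close>] by simp
    qed
  qed
  then show ?thesis unfolding alg_mult_def using True by (auto intro!: sum.neutral)
qed (auto simp add: alg_mult_def)

lemma mult_low2:
  assumes S: "in_S n c" and b: "\<forall>q<j. b q = 0"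
  shows "alg_mult n c a b j = 0"
proof (cases "j \<in> {1..n}")
  case True
  have "\<forall>p\<in>{1..n}. \<forall>q\<in>{1..n}. a p * b q * c p q j = 0"
  proof (intro ballI)
    fix p q assume p: "p \<in> {1..n}" and q: "q \<in> {1..n}"
    show "a p * b q * c p q j = 0"
    proof (cases "q < j")
      case True then show ?thesis using b by simp
    next
      case False then have "j \<le> max p q" by simp
      then show ?thesis using S_up[OF S p q \<open>j\<in>_\<close>] by simp
    qed
  qed
  then show ?thesis unfolding alg_mult_def using True by (auto intro!: sum.neutral)
qed (auto simp add: alg_mult_def)

lemma mult_basis_right:
  assumes "j \<in> {1..n}"
  shows "alg_mult n c a (basis_vec j) k = (if k\<in>{1..n} then (\<Sum>p\<in>{1..n}. a p * c p j k) else 0)"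
proof -
  have "\<And>p. (\<Sum>q\<in>{1..n}. a p * basis_vec j q * c p q k) = a p * c p j k"
  proof -
    fix p
    have "(\<Sum>q\<in>{1..n}. a p * basis_vec j q * c p q k) = (\<Sum>q\<in>{1..n}. if q = j then a p * c p j k else 0)"
      by (rule sum.cong) (auto simp: basis_vec_def)
    also have "\<dots> = a p * c p j k" using assms by simp
    finally show "?thesis p" .
  qed
  then show ?thesis unfolding alg_mult_def by simp
qed

lemma basis_mult:
  assumes "i \<in> {1..n}" "j \<in> {1..n}"
  shows "alg_mult n c (basis_vec i) (basis_vec j) k = (if k\<in>{1..n} then c i j k else 0)"
proof -
  have "(\<Sum>p\<in>{1..n}. basis_vec i p * c p j k) = (\<Sum>p\<in>{1..n}. if p = i then c i j k else 0)"
    by (rule sum.cong) (auto simp: basis_vec_def)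
  also have "\<dots> = c i j k" using assms by simp
  finally show ?thesis using assms by (simp add: mult_basis_right)
qed

lemma mult_scale:
  "alg_mult n c (vscale s a) (vscale t b) = vscale (s*t) (alg_mult n c a b)"
  unfolding alg_mult_def vscale_def
  by (auto simp: sum_distrib_left mult_ac intro!: sum.cong)

lemma basis_vspace: "i \<in> {1..n} \<Longrightarrow> basis_vec i \<in> vspace n"
  unfolding vspace_def basis_vec_def by auto

lemma lin_zero:
  assumes sc: "\<forall>t. \<forall>a\<in>vspace n. f (vscale t a) = vscale t (f a)"
  shows "f (\<lambda>k. 0) = (\<lambda>k. 0)"
proof -
  have z: "(\<lambda>k. 0::complex) \<in> vspace n" by (simp add: vspace_def)
  have "vscale 0 (\<lambda>k. 0) = (\<lambda>k. 0::complex)" by (simp add: vscale_def)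
  then have "f (\<lambda>k. 0) = f (vscale 0 (\<lambda>k. 0))" by simp
  also have "\<dots> = vscale 0 (f (\<lambda>k. 0))" using sc z by blast
  also have "\<dots> = (\<lambda>k. 0)" by (simp add: vscale_def)
  finally show ?thesis .
qed

lemma lin_expand:
  assumes add: "\<forall>a\<in>vspace n. \<forall>b\<in>vspace n. f (vadd a b) = vadd (f a) (f b)"
  and sc: "\<forall>t. \<forall>a\<in>vspace n. f (vscale t a) = vscale t (f a)"
  and v: "v \<in> vspace n"
  shows "f v k = (\<Sum>i\<in>{1..n}. v i * f (basis_vec i) k)"
proof -
  have gen: "S \<subseteq> {1..n} \<Longrightarrow> f (\<lambda>k. if k \<in> S then v k else 0) = (\<lambda>k. \<Sum>i\<in>S. v i * f (basis_vec i) k)" for S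
  proof (induction S rule: infinite_finite_induct)
    case (infinite S) then show ?case using finite_subset by blast
  next
    case empty then show ?case using lin_zero[OF sc] by simp
  next
    case (insert x S)
    have xS: "x \<in> {1..n}" "S \<subseteq> {1..n}" using insert by auto
    have eq: "(\<lambda>k. if k \<in> insert x S then v k else 0) = vadd (\<lambda>k. if k \<in> S then v k else 0) (vscale (v x) (basis_vec x))"
      using insert(2) by (auto simp: vadd_def vscale_def basis_vec_def)
    have m1: "(\<lambda>k. if k \<in> S then v k else 0) \<in> vspace n" using v by (auto simp: vspace_def)
    have m2: "vscale (v x) (basis_vec x) \<in> vspace n" using xS by (auto simp: vspace_def vscale_def basis_vec_def)
    have "f (\<lambda>k. if k \<in> insert x S then v k else 0) = vadd (f (\<lambda>k. if k \<in> S then v k else 0)) (f (vscale (v x) (basis_vec x)))"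
      using eq add m1 m2 by simp
    also have "\<dots> = vadd (\<lambda>k. \<Sum>i\<in>S. v i * f (basis_vec i) k) (vscale (v x) (f (basis_vec x)))"
      using insert(3)[OF xS(2)] sc basis_vspace[OF xS(1)] by simp
    also have "\<dots> = (\<lambda>k. \<Sum>i\<in>insert x S. v i * f (basis_vec i) k)"
      using insert(1,2) by (auto simp: vadd_def vscale_def)
    finally show ?case .
  qed
  have e: "(\<lambda>k. if k \<in> {1..n} then v k else 0) = v" using v by (auto simp: vspace_def)
  have "f v = (\<lambda>k. \<Sum>i\<in>{1..n}. v i * f (basis_vec i) k)" using gen[of "{1..n}"] unfolding e by simp
  then show ?thesis by simp
qed

lemma annih:
  assumes n4: "n \<ge> 4" and S: "in_S n c"
  shows "annihilator n c = {vscale t (basis_vec n) | t. True}"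
proof
  show "annihilator n c \<subseteq> {vscale t (basis_vec n) | t. True}"
  proof
    fix a assume aA: "a \<in> annihilator n c"
    then have av: "a \<in> vspace n" and ann: "\<And>b. b \<in> vspace n \<Longrightarrow> alg_mult n c a b = zero_vec"
      unfolding annihilator_def by auto
    have low: "\<forall>m. 1 \<le> m \<longrightarrow> m < n \<longrightarrow> a m = 0"
    proof (rule allI, induct_tac m rule: less_induct, intro impI)
      fix m assume IH: "\<And>y. y < m \<Longrightarrow> 1 \<le> y \<longrightarrow> y < n \<longrightarrow> a y = 0" and m: "1 \<le> m" "m < n"
      have mn: "m \<in> {1..n}" "m+1 \<in> {1..n}" using m by auto
      have "alg_mult n c a (basis_vec m) (m+1) = 0" using ann[OF basis_vspace[OF mn(1)]] by (simp add: zero_vec_def)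
      moreover have "alg_mult n c a (basis_vec m) (m+1) = (\<Sum>p\<in>{1..n}. a p * c p m (m+1))"
        using mult_basis_right[OF mn(1)] mn(2) by simp
      moreover have "(\<Sum>p\<in>{1..n}. a p * c p m (m+1)) = (\<Sum>p\<in>{1..n}. if p = m then a m else 0)"
      proof (rule sum.cong)
        fix p assume p: "p \<in> {1..n}"
        show "a p * c p m (m+1) = (if p = m then a m else 0)"
        proof (cases "p < m")
          case True then show ?thesis using IH[of p] p m by auto
        next
          case False
          show ?thesis
          proof (cases "p = m")
            case True then show ?thesis using S_sq[OF S m(1) m(2) mn(2)] by simp
          next
            case False2: False
            then have "m + 1 \<le> max p m" using False by simp
            then show ?thesis using S_up[OF S p mn(1) mn(2)] False2 by simp
          qed
        qed
      qed simp
      ultimately show "a m = 0" using mn by simp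
    qed
    have "a = vscale (a n) (basis_vec n)"
    proof
      fix k show "a k = vscale (a n) (basis_vec n) k"
        using low av by (cases "k \<in> {1..n}") (auto simp: vscale_def basis_vec_def vspace_def)
    qed
    then show "a \<in> {vscale t (basis_vec n) | t. True}" by blast
  qed
next
  show "{vscale t (basis_vec n) | t. True} \<subseteq> annihilator n c"
  proof clarify
    fix t
    let ?a = "vscale t (basis_vec n)"
    have lowa: "\<forall>p<n. ?a p = 0" by (simp add: vscale_def basis_vec_def)
    have av: "?a \<in> vspace n" using n4 by (auto simp: vspace_def vscale_def basis_vec_def)
    have "alg_mult n c ?a b = zero_vec \<and> alg_mult n c b ?a = zero_vec" if "b \<in> vspace n" for b
    proof
      show "alg_mult n c ?a b = zero_vec"
      proof
        fix k show "alg_mult n c ?a b k = zero_vec k"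
        proof (cases "k \<le> n")
          case True then show ?thesis using mult_low[OF S] lowa by (simp add: zero_vec_def)
        next
          case False then show ?thesis by (simp add: alg_mult_def zero_vec_def)
        qed
      qed
      show "alg_mult n c b ?a = zero_vec"
      proof
        fix k show "alg_mult n c b ?a k = zero_vec k"
        proof (cases "k \<le> n")
          case True then show ?thesis using mult_low2[OF S] lowa by (simp add: zero_vec_def)
        next
          case False then show ?thesis by (simp add: alg_mult_def zero_vec_def)
        qed
      qed
    qed
    then show "?a \<in> annihilator n c" using av unfolding annihilator_def by blast
  qed
qed

lemma auto_back:
  assumes n4: "n \<ge> 4" and S: "in_S n c"
    and fx: "\<forall>v\<in>vspace n. f v = vadd v (vscale (v 1 * x) (basis_vec n))"
  shows "is_automorphism n c f"
proof -
  have fv: "f v = (\<lambda>k. v k + (if k = n then v 1 * x else 0))" if "v \<in> vspace n" for v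
    using fx that by (auto simp: vadd_def vscale_def basis_vec_def)
  have n1: "n \<noteq> 1" using n4 by simp
  have into: "f v \<in> vspace n" if "v \<in> vspace n" for v
    using that n4 by (auto simp: fv vspace_def)
  have inj: "inj_on f (vspace n)"
  proof (rule inj_onI)
    fix a b assume a: "a \<in> vspace n" and b: "b \<in> vspace n" and e: "f a = f b"
    have "f a 1 = f b 1" using e by simp
    then have a1: "a 1 = b 1" using fv[OF a] fv[OF b] n1 by simp
    show "a = b"
    proof
      fix k show "a k = b k" using fun_cong[OF e, of k] fv[OF a] fv[OF b] a1 by (simp split: if_splits)
    qed
  qed
  have surj: "vspace n \<subseteq> f ` vspace n"
  proof
    fix w assume w: "w \<in> vspace n"
    define v where "v = (\<lambda>k. w k - (if k = n then w 1 * x else 0))"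
    have v: "v \<in> vspace n" using w n4 by (auto simp: vspace_def v_def)
    have "f v = w" using fv[OF v] n1 by (auto simp: v_def)
    then show "w \<in> f ` vspace n" using imageI[OF v, of f] by simp
  qed
  have bij: "bij_betw f (vspace n) (vspace n)"
    unfolding bij_betw_def using inj into surj by auto
  have vadd_in: "vadd a b \<in> vspace n" if "a \<in> vspace n" "b \<in> vspace n" for a b
    using that by (auto simp: vspace_def vadd_def)
  have vscale_in: "vscale t a \<in> vspace n" if "a \<in> vspace n" for a t
    using that by (auto simp: vspace_def vscale_def)
  have mult_in: "alg_mult n c a b \<in> vspace n" for a b
    by (auto simp: vspace_def alg_mult_def)
  have addf: "\<forall>a\<in>vspace n. \<forall>b\<in>vspace n. f (vadd a b) = vadd (f a) (f b)"
  proof (intro ballI)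
    fix a b assume a: "a \<in> vspace n" and b: "b \<in> vspace n"
    show "f (vadd a b) = vadd (f a) (f b)"
      using fv[OF vadd_in[OF a b]] fv[OF a] fv[OF b] by (simp add: vadd_def fun_eq_iff algebra_simps)
  qed
  have scf: "\<forall>t. \<forall>a\<in>vspace n. f (vscale t a) = vscale t (f a)"
  proof (intro allI ballI)
    fix t a assume a: "a \<in> vspace n"
    show "f (vscale t a) = vscale t (f a)"
      using fv[OF vscale_in[OF a]] fv[OF a] by (simp add: vscale_def fun_eq_iff algebra_simps)
  qed
  have mulf: "f (alg_mult n c a b) = alg_mult n c (f a) (f b)" if a: "a \<in> vspace n" and b: "b \<in> vspace n" for a b
  proof -
    have m1: "alg_mult n c a b 1 = 0" by (rule mult_low[OF S]) (use a in \<open>simp add: vspace_def\<close>)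
    have e: "(\<lambda>k. alg_mult n c a b k + (if k = n then alg_mult n c a b 1 * x else 0)) = alg_mult n c a b"
      using m1 by (simp add: fun_eq_iff)
    have lhs: "f (alg_mult n c a b) = alg_mult n c a b" using fv[OF mult_in, of a b] e by simp
    have "alg_mult n c (f a) (f b) k = alg_mult n c a b k" for k
    proof (cases "k \<in> {1..n}")
      case True
      have "\<forall>p\<in>{1..n}. \<forall>q\<in>{1..n}. f a p * f b q * c p q k = a p * b q * c p q k"
      proof (intro ballI)
        fix p q assume p: "p \<in> {1..n}" and q: "q \<in> {1..n}"
        show "f a p * f b q * c p q k = a p * b q * c p q k"
        proof (cases "p = n \<or> q = n")
          case True
          then have "k \<le> max p q" using \<open>k\<in>{1..n}\<close> by auto
          then show ?thesis using S_up[OF S p q \<open>k\<in>_\<close>] by simp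
        next
          case False then show ?thesis using fv[OF a] fv[OF b] by simp
        qed
      qed
      then show ?thesis unfolding alg_mult_def using True by (auto intro!: sum.cong)
    qed (auto simp add: alg_mult_def)
    then show ?thesis using lhs by auto
  qed
  show ?thesis unfolding is_automorphism_def using bij addf scf mulf by blast
qed

lemma sq_diag:
  assumes S: "in_S n c" and i: "1 \<le> i" "i < n" and a: "\<forall>p<i. a p = 0"
  shows "alg_mult n c a a (i+1) = a i * a i"
proof -
  have i1: "i+1 \<in> {1..n}" "i \<in> {1..n}" using i by auto
  have inner: "(\<Sum>q\<in>{1..n}. a p * a q * c p q (i+1)) = (if p = i then a i * a i else 0)" if p: "p \<in> {1..n}" for p
  proof -
    have "(\<Sum>q\<in>{1..n}. a p * a q * c p q (i+1)) = (\<Sum>q\<in>{1..n}. if q = i then a p * a i * c p i (i+1) else 0)"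
    proof (rule sum.cong)
      fix q assume q: "q \<in> {1..n}"
      show "a p * a q * c p q (i+1) = (if q = i then a p * a i * c p i (i+1) else 0)"
      proof (cases "q < i")
        case True then show ?thesis using a by simp
      next
        case False
        show ?thesis
        proof (cases "q = i")
          case False2: False
          then have "i+1 \<le> max p q" using False by simp
          then show ?thesis using S_up[OF S p q i1(1)] False2 by simp
        qed simp
      qed
    qed simp
    also have "\<dots> = a p * a i * c p i (i+1)" using i1 by simp
    also have "\<dots> = (if p = i then a i * a i else 0)"
    proof (cases "p < i")
      case True then show ?thesis using a by simp
    next
      case False
      show ?thesis
      proof (cases "p = i")
        case True then show ?thesis using S_sq[OF S i i1(1)] by simp
      next
        case False2: False
        then have "i+1 \<le> max p i" using False by simp
        then show ?thesis using S_up[OF S p i1(2) i1(1)] False2 by simp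
      qed
    qed
    finally show ?thesis .
  qed
  have "alg_mult n c a a (i+1) = (\<Sum>p\<in>{1..n}. if p = i then a i * a i else 0)"
    unfolding alg_mult_def using i1 inner by (auto intro!: sum.cong)
  then show ?thesis using i1 by simp
qed

lemma mult_lead:
  assumes S: "in_S n c" and m: "2 \<le> m" "m < n" and b: "\<forall>q<m. b q = 0"
    and a: "\<forall>p. 2 \<le> p \<longrightarrow> p < m \<longrightarrow> a p = 0"
  shows "alg_mult n c a b (m+1) = a m * b m"
proof -
  have m1: "m+1 \<in> {1..n}" "m \<in> {1..n}" using m by auto
  have inner: "(\<Sum>q\<in>{1..n}. a p * b q * c p q (m+1)) = (if p = m then a m * b m else 0)" if p: "p \<in> {1..n}" for p
  proof -
    have "(\<Sum>q\<in>{1..n}. a p * b q * c p q (m+1)) = (\<Sum>q\<in>{1..n}. if q = m then a p * b m * c p m (m+1) else 0)"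
    proof (rule sum.cong)
      fix q assume q: "q \<in> {1..n}"
      show "a p * b q * c p q (m+1) = (if q = m then a p * b m * c p m (m+1) else 0)"
      proof (cases "q < m")
        case True then show ?thesis using b by simp
      next
        case False
        show ?thesis
        proof (cases "q = m")
          case False2: False
          then have "m+1 \<le> max p q" using False by simp
          then show ?thesis using S_up[OF S p q m1(1)] False2 by simp
        qed simp
      qed
    qed simp
    also have "\<dots> = a p * b m * c p m (m+1)" using m1 by simp
    also have "\<dots> = (if p = m then a m * b m else 0)"
    proof (cases "p = m")
      case True then show ?thesis using S_sq[OF S _ m(2) m1(1)] m by simp
    next
      case False2: False
      show ?thesis
      proof (cases "p = 1")
        case True then show ?thesis using S_1i[OF S m] False2 by simp
      next
        case False
        show ?thesis
        proof (cases "p < m")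
          case True then show ?thesis using a False p False2 by auto
        next
          case False3: False
          then have "m+1 \<le> max p m" using False2 by simp
          then show ?thesis using S_up[OF S p m1(2) m1(1)] False2 by simp
        qed
      qed
    qed
    finally show ?thesis .
  qed
  have "alg_mult n c a b (m+1) = (\<Sum>p\<in>{1..n}. if p = m then a m * b m else 0)"
    unfolding alg_mult_def using m1 inner by (auto intro!: sum.cong)
  then show ?thesis using m1 by simp
qed

lemma sq_sparse:
  assumes S: "in_S n c" and i: "1 \<le> i" "i < n" and av: "a \<in> vspace n"
    and a: "\<forall>p\<in>{1..n}. p \<noteq> i \<and> p \<noteq> n \<longrightarrow> a p = 0"
  shows "alg_mult n c a a = vscale (a i * a i) (basis_vec (i+1))"
proof
  fix k
  show "alg_mult n c a a k = vscale (a i * a i) (basis_vec (i+1)) k"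
  proof (cases "k \<in> {1..n}")
    case False
    then have "k \<noteq> i+1" using i by auto
    then show ?thesis using False by (auto simp add: alg_mult_def vscale_def basis_vec_def)
  next
    case True
    have i1: "i \<in> {1..n}" "n \<in> {1..n}" using i by auto
    have inner: "(\<Sum>q\<in>{1..n}. a p * a q * c p q k) = (if p = i then a i * a i * c i i k else 0)" if p: "p \<in> {1..n}" for p
    proof -
      have "(\<Sum>q\<in>{1..n}. a p * a q * c p q k) = (\<Sum>q\<in>{1..n}. if q = i then a p * a i * c p i k else 0)"
      proof (rule sum.cong)
        fix q assume q: "q \<in> {1..n}"
        show "a p * a q * c p q k = (if q = i then a p * a i * c p i k else 0)"
        proof (cases "q = i")
          case False
          show ?thesis
          proof (cases "q = n")
            case True
            then have "k \<le> max p q" using \<open>k \<in> {1..n}\<close> by auto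
            then show ?thesis using S_up[OF S p q \<open>k\<in>_\<close>] False by simp
          next
            case False2: False then show ?thesis using a q False by simp
          qed
        qed simp
      qed simp
      also have "\<dots> = a p * a i * c p i k" using i1 by simp
      also have "\<dots> = (if p = i then a i * a i * c i i k else 0)"
      proof (cases "p = i")
        case False
        show ?thesis
        proof (cases "p = n")
          case True
          then have "k \<le> max p i" using \<open>k \<in> {1..n}\<close> by auto
          then show ?thesis using S_up[OF S p i1(1) \<open>k\<in>_\<close>] False by simp
        next
          case False2: False then show ?thesis using a p False by simp
        qed
      qed simp
      finally show ?thesis .
    qed
    have "alg_mult n c a a k = (\<Sum>p\<in>{1..n}. if p = i then a i * a i * c i i k else 0)"
      unfolding alg_mult_def using True inner by (auto intro!: sum.cong)
    also have "\<dots> = a i * a i * c i i k" using i1 by simp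
    also have "\<dots> = vscale (a i * a i) (basis_vec (i+1)) k"
      using S_sq[OF S i True] by (simp add: vscale_def basis_vec_def)
    finally show ?thesis .
  qed
qed

lemma d_alg:
  fixes d :: complex
  assumes "d \<noteq> 0" "d^2 * d^4 = d^8" "d * d^2 = d^8"
  shows "d = 1"
proof -
  have e1: "d^6 * (d^2 - 1) = d^8 - d^2 * d^4" by algebra
  have "d^6 * (d^2 - 1) = 0" using assms(2) e1 by simp
  then have d2: "d^2 = 1" using assms(1) by simp
  have e2: "d^3 * (d^5 - 1) = d^8 - d * d^2" by algebra
  have "d^3 * (d^5 - 1) = 0" using assms(3) e2 by simp
  then have "d^5 = 1" using assms(1) by simp
  moreover have "d^5 = d * (d^2)^2" by algebra
  ultimately show ?thesis using d2 by simp
qed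

lemma auto_fwd:
  assumes n4: "n \<ge> 4" and S: "in_S n c" and A: "is_automorphism n c f"
  shows "\<exists>x. \<forall>v\<in>vspace n. f v = vadd v (vscale (v 1 * x) (basis_vec n))"
proof -
  have bij: "bij_betw f (vspace n) (vspace n)"
    and add: "\<forall>a\<in>vspace n. \<forall>b\<in>vspace n. f (vadd a b) = vadd (f a) (f b)"
    and sc: "\<forall>t. \<forall>a\<in>vspace n. f (vscale t a) = vscale t (f a)"
    and mul: "\<forall>a\<in>vspace n. \<forall>b\<in>vspace n. f (alg_mult n c a b) = alg_mult n c (f a) (f b)"
    using A unfolding is_automorphism_def by auto
  define u where "u = f (basis_vec 1)"
  define D where "D i = f (basis_vec i) i" for i
  have Ev: "\<And>i. i\<in>{1..n} \<Longrightarrow> basis_vec i \<in> vspace n" by (rule basis_vspace)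
  have fEv: "\<And>i. i\<in>{1..n} \<Longrightarrow> f (basis_vec i) \<in> vspace n" using bij Ev bij_betwE by blast
  have uv: "u \<in> vspace n" using fEv n4 by (simp add: u_def)
  have sq: "alg_mult n c (basis_vec i) (basis_vec i) = basis_vec (i+1)" if "1 \<le> i" "i < n" for i
  proof
    fix k
    have i: "i \<in> {1..n}" "i+1 \<in> {1..n}" using that by auto
    show "alg_mult n c (basis_vec i) (basis_vec i) k = basis_vec (i+1) k"
      using basis_mult[OF i(1) i(1), of c k] S_sq[OF S that, of k] i
      by (auto simp: basis_vec_def)
  qed
  have fsq: "f (basis_vec (i+1)) = alg_mult n c (f (basis_vec i)) (f (basis_vec i))" if "1 \<le> i" "i < n" for i
  proof -
    have "i \<in> {1..n}" using that by auto
    then have "f (alg_mult n c (basis_vec i) (basis_vec i)) = alg_mult n c (f (basis_vec i)) (f (basis_vec i))"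
      using mul Ev by blast
    then show ?thesis using sq[OF that] by simp
  qed
  have tri_gen: "1 \<le> i \<longrightarrow> i \<le> n \<longrightarrow> (\<forall>j<i+s. f (basis_vec i) j = 0)" if h: "\<forall>p<1+s. u p = 0" for s i
  proof (induction i)
    case 0 then show ?case by simp
  next
    case (Suc i)
    show ?case
    proof (cases "i = 0")
      case True then show ?thesis using h by (simp add: u_def)
    next
      case False
      show ?thesis
      proof (intro impI allI)
        fix j assume i: "1 \<le> Suc i" "Suc i \<le> n" and j: "j < Suc i + s"
        have i': "1 \<le> i" "i < n" using i False by auto
        have "\<forall>p<j. f (basis_vec i) p = 0" using Suc.IH i' j by auto
        then have "alg_mult n c (f (basis_vec i)) (f (basis_vec i)) j = 0" by (rule mult_low[OF S])
        then show "f (basis_vec (Suc i)) j = 0" using fsq[OF i'] by simp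
      qed
    qed
  qed
  have u0: "u 0 = 0" using uv by (simp add: vspace_def)
  have tri: "\<And>i j. i \<in> {1..n} \<Longrightarrow> j < i \<Longrightarrow> f (basis_vec i) j = 0"
    using tri_gen[of 0] u0 by auto
  have d0: "u 1 \<noteq> 0"
  proof
    assume u1: "u 1 = 0"
    have h: "\<forall>p<1+1. u p = 0" using u0 u1 by (auto simp: less_Suc_eq)
    have "f (basis_vec n) = (\<lambda>k. 0)"
    proof
      fix k show "f (basis_vec n) k = 0"
      proof (cases "k \<le> n")
        case True then show ?thesis using tri_gen[OF h, of n] n4 by auto
      next
        case False then show ?thesis using fEv[of n] n4 by (auto simp: vspace_def)
      qed
    qed
    moreover have "f (\<lambda>k. 0) = (\<lambda>k. 0)" by (rule lin_zero[OF sc])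
    moreover have "(\<lambda>k. 0::complex) \<in> vspace n" by (simp add: vspace_def)
    moreover have "inj_on f (vspace n)" using bij by (simp add: bij_betw_def)
    moreover have "basis_vec n \<in> vspace n" using Ev[of n] n4 by simp
    ultimately have "basis_vec n = (\<lambda>k. 0)" by (metis inj_onD)
    then have "basis_vec n n = 0" by simp
    then show False by (simp add: basis_vec_def)
  qed
  have preserve: "\<And>w k j. w \<in> vspace n \<Longrightarrow> \<forall>p<k. w p = 0 \<Longrightarrow> j < k \<Longrightarrow> f w j = 0"
  proof -
    fix w k j assume w: "w \<in> vspace n" and wk: "\<forall>p<k. w p = 0" and j: "j < k"
    have hz: "\<forall>i\<in>{1..n}. w i * f (basis_vec i) j = 0"
    proof
      fix i assume i: "i \<in> {1..n}"
      show "w i * f (basis_vec i) j = 0"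
      proof (cases "i < k")
        case True then show ?thesis using wk by simp
      next
        case False then show ?thesis using tri[OF i] j by simp
      qed
    qed
    show "f w j = 0" using lin_expand[OF add sc w, of j] sum.neutral[OF hz] by simp
  qed
  have Dstep: "D (i+1) = D i * D i" if "1 \<le> i" "i < n" for i
  proof -
    have "i \<in> {1..n}" using that by auto
    then have "\<forall>p<i. f (basis_vec i) p = 0" using tri by blast
    then show ?thesis using fsq[OF that] sq_diag[OF S that] by (simp add: D_def)
  qed
  have Dnz: "1 \<le> i \<longrightarrow> i \<le> n \<longrightarrow> D i \<noteq> 0" for i
  proof (induction i)
    case (Suc i)
    show ?case
    proof (cases "i = 0")
      case True then show ?thesis using d0 by (simp add: D_def u_def)
    next
      case False then show ?thesis using Suc.IH Dstep[of i] by auto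
    qed
  qed simp
  have usm: "\<forall>m. 2 \<le> m \<longrightarrow> m < n \<longrightarrow> u m = 0"
  proof (rule allI, induct_tac m rule: less_induct, intro impI)
    fix m assume IH: "\<And>y. y < m \<Longrightarrow> 2 \<le> y \<longrightarrow> y < n \<longrightarrow> u y = 0" and m: "2 \<le> m" "m < n"
    have mn: "m \<in> {1..n}" "1 \<in> {1..n}" using m by auto
    define w where "w = alg_mult n c (basis_vec 1) (basis_vec m)"
    have wv: "w \<in> vspace n" by (auto simp: vspace_def alg_mult_def w_def)
    have wl: "\<forall>p<m+2. w p = 0"
    proof (intro allI impI)
      fix p assume p: "p < m+2"
      show "w p = 0"
      proof (cases "p \<in> {1..n}")
        case True
        have "c 1 m p = 0"
        proof (cases "p = m+1")
          case True then show ?thesis using S_1i[OF S m] by simp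
        next
          case False
          then have "p \<le> max 1 m" using p m by auto
          then show ?thesis using S_up[OF S mn(2) mn(1) True] by simp
        qed
        then show ?thesis using basis_mult[OF mn(2) mn(1), of c p] True by (simp add: w_def)
      qed (auto simp add: w_def alg_mult_def)
    qed
    have "f w (m+1) = 0" using preserve[OF wv wl] by simp
    moreover have "f w = alg_mult n c u (f (basis_vec m))"
      using mul Ev mn by (simp add: w_def u_def)
    moreover have "alg_mult n c u (f (basis_vec m)) (m+1) = u m * D m"
    proof -
      have h1: "\<forall>q<m. f (basis_vec m) q = 0" using tri[OF mn(1)] by blast
      have h2: "\<forall>p. 2 \<le> p \<longrightarrow> p < m \<longrightarrow> u p = 0" using IH m by auto
      show ?thesis using mult_lead[OF S m h1 h2] by (simp add: D_def)
    qed
    ultimately have "u m * D m = 0" by simp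
    then show "u m = 0" using Dnz[of m] m by simp
  qed
  have usp: "\<forall>p\<in>{1..n}. p \<noteq> 1 \<and> p \<noteq> n \<longrightarrow> u p = 0" using usm by auto
  have formG: "2 \<le> i \<longrightarrow> i \<le> n \<longrightarrow> f (basis_vec i) = vscale (D i) (basis_vec i)" for i
  proof (induction i)
    case (Suc i)
    show ?case
    proof (intro impI)
      assume i: "2 \<le> Suc i" "Suc i \<le> n"
      have i': "1 \<le> i" "i < n" using i by auto
      show "f (basis_vec (Suc i)) = vscale (D (Suc i)) (basis_vec (Suc i))"
      proof (cases "i = 1")
        case True
        have "f (basis_vec (Suc i)) = vscale (u 1 * u 1) (basis_vec (1+1))"
          using fsq[OF i'] sq_sparse[OF S _ _ uv usp] True n4 by (simp add: u_def)
        then show ?thesis using Dstep[of 1] True n4 by (simp add: D_def u_def)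
      next
        case False
        then have IH: "f (basis_vec i) = vscale (D i) (basis_vec i)" using Suc.IH i' by auto
        have iv: "vscale (D i) (basis_vec i) \<in> vspace n" using i' by (auto simp: vspace_def vscale_def basis_vec_def)
        have "\<forall>p\<in>{1..n}. p \<noteq> i \<and> p \<noteq> n \<longrightarrow> vscale (D i) (basis_vec i) p = 0"
          by (simp add: vscale_def basis_vec_def)
        then have "alg_mult n c (vscale (D i) (basis_vec i)) (vscale (D i) (basis_vec i))
             = vscale (D i * D i) (basis_vec (i+1))"
          using sq_sparse[OF S i' iv] by (simp add: vscale_def basis_vec_def)
        then show ?thesis using fsq[OF i'] IH Dstep[OF i'] by simp
      qed
    qed
  qed simp
  have coef4: "f w 4 = w 4 * D 4" if w: "w \<in> vspace n" and w1: "w 1 = 0" for w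
  proof -
    have "f w 4 = (\<Sum>i\<in>{1..n}. w i * f (basis_vec i) 4)" by (rule lin_expand[OF add sc w])
    also have "\<dots> = (\<Sum>i\<in>{1..n}. if i = 4 then w 4 * D 4 else 0)"
    proof (rule sum.cong)
      fix i assume i: "i \<in> {1..n}"
      show "w i * f (basis_vec i) 4 = (if i = 4 then w 4 * D 4 else 0)"
      proof (cases "i = 1")
        case True then show ?thesis using w1 by simp
      next
        case False
        then have "f (basis_vec i) = vscale (D i) (basis_vec i)" using formG[of i] i by auto
        then show ?thesis by (auto simp: vscale_def basis_vec_def)
      qed
    qed simp
    also have "\<dots> = w 4 * D 4" using n4 by simp
    finally show ?thesis .
  qed
  have in2: "2 \<in> {1..n}" "3 \<in> {1..n}" "4 \<in> {1..n}" "1 \<in> {1..n}" using n4 by auto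
  have fE2: "f (basis_vec 2) = vscale (D 2) (basis_vec 2)" using formG[of 2] n4 by simp
  have fE3: "f (basis_vec 3) = vscale (D 3) (basis_vec 3)" using formG[of 3] n4 by simp
  have mv: "alg_mult n c a b \<in> vspace n" for a b by (auto simp: vspace_def alg_mult_def)
  have rel1: "D 2 * D 3 = D 4"
  proof -
    define w where "w = alg_mult n c (basis_vec 2) (basis_vec 3)"
    have wv: "w \<in> vspace n" unfolding w_def by (rule mv)
    have w1: "w 1 = 0" using basis_mult[OF in2(1,2), of c 1] S_up[OF S in2(1,2) in2(4)] in2 by (simp add: w_def)
    have w4: "w 4 = 1" using basis_mult[OF in2(1,2), of c 4] S_234[OF S] in2 by (simp add: w_def)
    have "f w = alg_mult n c (vscale (D 2) (basis_vec 2)) (vscale (D 3) (basis_vec 3))"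
      using mul Ev in2 fE2 fE3 by (simp add: w_def)
    also have "\<dots> = vscale (D 2 * D 3) w" by (simp add: mult_scale w_def)
    finally have "f w 4 = D 2 * D 3" using w4 by (simp add: vscale_def)
    then show ?thesis using coef4[OF wv w1] w4 by (simp add: w_def)
  qed
  have rel2: "c 1 2 4 * D 4 = D 2 * u 1 * c 1 2 4"
  proof -
    define w where "w = alg_mult n c (basis_vec 1) (basis_vec 2)"
    have wv: "w \<in> vspace n" unfolding w_def by (rule mv)
    have w1: "w 1 = 0" using basis_mult[OF in2(4,1), of c 1] S_up[OF S in2(4,1) in2(4)] in2 by (simp add: w_def)
    have w4: "w 4 = c 1 2 4" using basis_mult[OF in2(4,1), of c 4] in2 by (simp add: w_def)
    have "f w = alg_mult n c (vscale 1 u) (vscale (D 2) (basis_vec 2))"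
      using mul Ev in2 fE2 by (simp add: w_def u_def vscale_def)
    also have "\<dots> = vscale (D 2) (alg_mult n c u (basis_vec 2))" by (simp add: mult_scale)
    finally have fw: "f w 4 = D 2 * alg_mult n c u (basis_vec 2) 4" by (simp add: vscale_def)
    have "alg_mult n c u (basis_vec 2) 4 = (\<Sum>p\<in>{1..n}. u p * c p 2 4)"
      using mult_basis_right[OF in2(1)] in2 by simp
    also have "\<dots> = (\<Sum>p\<in>{1..n}. if p = 1 then u 1 * c 1 2 4 else 0)"
    proof (rule sum.cong)
      fix p assume p: "p \<in> {1..n}"
      show "u p * c p 2 4 = (if p = 1 then u 1 * c 1 2 4 else 0)"
      proof (cases "p = 1")
        case False
        show ?thesis
        proof (cases "p = n")
          case True
          then have "4 \<le> max p 2" using n4 by simp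
          then show ?thesis using S_up[OF S p in2(1) in2(3)] False by simp
        next
          case False2: False then show ?thesis using usp p False by simp
        qed
      qed simp
    qed simp
    also have "\<dots> = u 1 * c 1 2 4" using n4 by simp
    finally show ?thesis using fw coef4[OF wv w1] w4 by (auto simp add: w_def)
  qed
  have D11: "D (1+1) = D 1 * D 1" using Dstep[of 1] n4 by simp
  have D1u: "D 1 = u 1" by (simp add: D_def u_def)
  have D2': "D 2 = D 1 * D 1" using D11 by (simp add: numeral_2_eq_2)
  have D2: "D 2 = u 1 ^ 2" unfolding D2' D1u by (simp add: power2_eq_square)
  have D3: "D 3 = u 1 ^ 4" using Dstep[of 2] n4 D2 by (simp add: power_mult_distrib flip: power_add)
  have D4: "D 4 = u 1 ^ 8" using Dstep[of 3] n4 D3 by (simp flip: power_add)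
  have d1: "u 1 = 1"
  proof (rule d_alg[OF d0])
    show "u 1 ^ 2 * u 1 ^ 4 = u 1 ^ 8" using rel1 D2 D3 D4 by simp
    show "u 1 * u 1 ^ 2 = u 1 ^ 8" using rel2 D2 D4 S_124[OF S] by (simp add: mult_ac)
  qed
  have D1: "2 \<le> i \<longrightarrow> i \<le> n \<longrightarrow> D i = 1" for i
  proof (induction i)
    case (Suc i)
    then show ?case using Dstep[of i] D2 d1 D1u by (cases "i = 1") auto
  qed simp
  define x where "x = u n"
  have fEi: "f (basis_vec i) k = basis_vec i k + (if i = 1 then x * basis_vec n k else 0)" if i: "i \<in> {1..n}" for i k
  proof (cases "i = 1")
    case True
    have "u k = basis_vec 1 k + x * basis_vec n k"
    proof (cases "k \<in> {1..n}")
      case True then show ?thesis using usp d1 n4 by (auto simp: basis_vec_def x_def)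
    next
      case False then show ?thesis using uv n4 by (auto simp: vspace_def basis_vec_def)
    qed
    then show ?thesis using True by (simp add: u_def)
  next
    case False
    then have "f (basis_vec i) = vscale (D i) (basis_vec i)" "D i = 1" using formG[of i] D1[of i] i by auto
    then show ?thesis using False by (simp add: vscale_def)
  qed
  have fin: "f v = vadd v (vscale (v 1 * x) (basis_vec n))" if v: "v \<in> vspace n" for v
  proof
    fix k
    have "f v k = (\<Sum>i\<in>{1..n}. v i * f (basis_vec i) k)" by (rule lin_expand[OF add sc v])
    also have "\<dots> = (\<Sum>i\<in>{1..n}. (if i = k then v k else 0) + (if i = 1 then v 1 * x * basis_vec n k else 0))"
    proof (rule sum.cong)
      fix i assume i: "i \<in> {1..n}"
      show "v i * f (basis_vec i) k = (if i = k then v k else 0) + (if i = 1 then v 1 * x * basis_vec n k else 0)"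
        unfolding fEi[OF i, of k] by (simp add: basis_vec_def distrib_left mult.assoc)
    qed simp
    also have "\<dots> = (\<Sum>i\<in>{1..n}. if i = k then v k else 0) + (\<Sum>i\<in>{1..n}. if i = 1 then v 1 * x * basis_vec n k else 0)"
      by (rule sum.distrib)
    also have "\<dots> = (if k \<in> {1..n} then v k else 0) + v 1 * x * basis_vec n k"
      using n4 by simp
    also have "\<dots> = v k + v 1 * x * basis_vec n k"
      using v by (simp add: vspace_def)
    finally show "f v k = vadd v (vscale (v 1 * x) (basis_vec n)) k" by (simp add: vadd_def vscale_def)
  qed
  show ?thesis by (rule exI[of _ x], intro ballI fin)
qed

theorem mainTheorem13:
  fixes n :: nat and c :: "nat \<Rightarrow> nat \<Rightarrow> nat \<Rightarrow> complex"
  assumes "n \<ge> 4" and "in_S n c"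
  shows "annihilator n c = {vscale t (basis_vec n) | t. True} \<and>
    (\<forall>f. is_automorphism n c f \<longleftrightarrow>
       (\<exists>x::complex. \<forall>v\<in>vspace n. f v = vadd v (vscale (v 1 * x) (basis_vec n))))"
proof (intro conjI allI iffI)
  show "annihilator n c = {vscale t (basis_vec n) | t. True}" by (rule annih[OF assms])
next
  fix f assume "is_automorphism n c f"
  then show "\<exists>x::complex. \<forall>v\<in>vspace n. f v = vadd v (vscale (v 1 * x) (basis_vec n))"
    by (rule auto_fwd[OF assms])
next
  fix f assume "\<exists>x::complex. \<forall>v\<in>vspace n. f v = vadd v (vscale (v 1 * x) (basis_vec n))"
  then obtain x where "\<forall>v\<in>vspace n. f v = vadd v (vscale (v 1 * x) (basis_vec n))" by blast
  then show "is_automorphism n c f" by (rule auto_back[OF assms])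
qed

end
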